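(* Let $\mathbf u$ be the infinite word over $\{0,1,2,3\}$ that is the fixed point starting with $0$ of the morphism $\varphi$ given by $\varphi(0)=0130$, $\varphi(1)=1021$, $\varphi(2)=102$, $\varphi(3)=013$. Let $\theta_1,\theta_2$ be the antimorphisms on $\{0,1,2,3\}^*$ defined on letters by $\theta_1: 0\mapsto 1, 1\mapsto 0, 2\mapsto 2, 3\mapsto 3$ and $\theta_2: 0\mapsto 0, 1\mapsto 1, 2\mapsto 3, 3\mapsto 2$. Then every nonempty bispecial factor $w$ of $\mathbf u$ satisfies $\theta_i(w)=w$ for some $i\in\{1,2\}$.
   Context: The fixed point starting with $0$ is the unique infinite word having $\varphi^n(0)$ as a prefix for every $n$. An antimorphism $\theta$ satisfies $\theta(vw)=\theta(w)\theta(v)$. A factor $w$ of $\mathbf u$ is right special if $wa,wb$ are factors of $\mathbf u$ for two distinct letters $a,b$, left special if $aw,bw$ are factors for two distinct letters $a,b$, and bispecial if it is both. *)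

theory Defs
  imports Main
begin

text \<open>Letters of the alphabet {0,1,2,3} are represented by natural numbers;
finite words are lists, infinite words are functions nat => nat.\<close>

fun phi_letter :: "nat \<Rightarrow> nat list" where
  "phi_letter a = (if a = 0 then [0,1,3,0] else if a = 1 then [1,0,2,1]
                   else if a = 2 then [1,0,2] else [0,1,3])"

definition phi :: "nat list \<Rightarrow> nat list" where
  "phi w = concat (map phi_letter w)"

definition prefix_of_inf :: "nat list \<Rightarrow> (nat \<Rightarrow> nat) \<Rightarrow> bool" where
  "prefix_of_inf v x \<longleftrightarrow> (\<forall>i < length v. v ! i = x i)"

definition is_fixed_point_0 :: "(nat \<Rightarrow> nat) \<Rightarrow> bool" where
  "is_fixed_point_0 x \<longleftrightarrow> (\<forall>n. prefix_of_inf ((phi ^^ n) [0]) x)"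

definition factor :: "nat list \<Rightarrow> (nat \<Rightarrow> nat) \<Rightarrow> bool" where
  "factor w x \<longleftrightarrow> (\<exists>i. w = map x [i..<i + length w])"

definition right_special :: "nat list \<Rightarrow> (nat \<Rightarrow> nat) \<Rightarrow> bool" where
  "right_special w x \<longleftrightarrow> (\<exists>a b. a \<noteq> b \<and> factor (w @ [a]) x \<and> factor (w @ [b]) x)"

definition left_special :: "nat list \<Rightarrow> (nat \<Rightarrow> nat) \<Rightarrow> bool" where
  "left_special w x \<longleftrightarrow> (\<exists>a b. a \<noteq> b \<and> factor (a # w) x \<and> factor (b # w) x)"

definition bispecial :: "nat list \<Rightarrow> (nat \<Rightarrow> nat) \<Rightarrow> bool" where
  "bispecial w x \<longleftrightarrow> right_special w x \<and> left_special w x"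

definition antimorph :: "(nat \<Rightarrow> nat) \<Rightarrow> nat list \<Rightarrow> nat list" where
  "antimorph f w = rev (map f w)"

definition theta1_letter :: "nat \<Rightarrow> nat" where
  "theta1_letter a = (if a = 0 then 1 else if a = 1 then 0 else a)"

definition theta2_letter :: "nat \<Rightarrow> nat" where
  "theta2_letter a = (if a = 2 then 3 else if a = 3 then 2 else a)"

definition theta1 :: "nat list \<Rightarrow> nat list" where
  "theta1 = antimorph theta1_letter"

definition theta2 :: "nat list \<Rightarrow> nat list" where
  "theta2 = antimorph theta2_letter"

end

theory Submission
  imports Defs "HOL-Library.Sublist"
begin

declare phi_letter.simps [simp del]

lemma phi_Nil [simp]: "phi [] = []" by (simp add: phi_def)
lemma phi_Cons [simp]: "phi (a # w) = phi_letter a @ phi w" by (simp add: phi_def)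
lemma phi_append [simp]: "phi (v @ w) = phi v @ phi w" by (simp add: phi_def)

lemma pl0 [simp]: "phi_letter 0 = [0,1,3,0]" by (simp add: phi_letter.simps)
lemma pl1 [simp]: "phi_letter (Suc 0) = [1,0,2,1]" by (simp add: phi_letter.simps)
lemma pl1' [simp]: "phi_letter 1 = [1,0,2,1]" by (simp add: phi_letter.simps)
lemma pl2 [simp]: "phi_letter 2 = [1,0,2]" by (simp add: phi_letter.simps)
lemma pl3 [simp]: "a \<ge> 3 \<Longrightarrow> phi_letter a = [0,1,3]" by (simp add: phi_letter.simps)

lemma pl_cases: "phi_letter a = [0,1,3,0] \<or> phi_letter a = [1,0,2,1] \<or> phi_letter a = [1,0,2] \<or> phi_letter a = [0,1,3]"
  by (simp add: phi_letter.simps)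

lemma len_pl: "3 \<le> length (phi_letter a)"
  using pl_cases[of a] by auto

lemma len_phi: "3 * length w \<le> length (phi w)"
proof (induction w)
  case Nil then show ?case by simp
next
  case (Cons a w) then show ?case using len_pl[of a] by simp
qed

lemma letter_cases: "(a::nat) \<le> 3 \<Longrightarrow> a = 0 \<or> a = 1 \<or> a = 2 \<or> a = 3"
  by auto

definition GLb :: "nat \<Rightarrow> nat list list" where
  "GLb n = (if n = 0 then [[]] 
    else if n = 1 then [[0], [1], [2], [3]]
    else if n = 2 then [[0,1], [0,2], [1,0], [1,3], [2,1], [3,0]]
    else if n = 3 then [[0,1,0], [0,1,3], [0,2,1], [1,0,1], [1,0,2], [1,3,0], [2,1,0], [3,0,1]]
    else if n = 4 then [[0,1,0,2], [0,1,3,0], [0,2,1,0], [1,0,1,3], [1,0,2,1], [1,3,0,1], [2,1,0,1], [2,1,0,2], [3,0,1,0], [3,0,1,3]]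
    else if n = 5 then [[0,1,0,2,1], [0,1,3,0,1], [0,2,1,0,1], [0,2,1,0,2], [1,0,1,3,0], [1,0,2,1,0], [1,3,0,1,0], [1,3,0,1,3], [2,1,0,1,3], [2,1,0,2,1], [3,0,1,0,2], [3,0,1,3,0]]
    else if n = 6 then [[0,1,0,2,1,0], [0,1,3,0,1,0], [0,1,3,0,1,3], [0,2,1,0,1,3], [0,2,1,0,2,1], [1,0,1,3,0,1], [1,0,2,1,0,1], [1,0,2,1,0,2], [1,3,0,1,0,2], [1,3,0,1,3,0], [2,1,0,1,3,0], [2,1,0,2,1,0], [3,0,1,0,2,1], [3,0,1,3,0,1]]
    else [])"

definition inG :: "nat list \<Rightarrow> bool" where
  "inG x \<longleftrightarrow> x \<in> set (GLb (length x))"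

definition subs :: "nat list \<Rightarrow> nat list list" where
  "subs xs = [take k (drop i xs). i \<leftarrow> [0..<length xs], k \<leftarrow> [1..<7]]"

lemma sublist_subs:
  assumes "sublist x xs" "x \<noteq> []" "length x \<le> 6"
  shows "x \<in> set (subs xs)"
proof -
  from assms(1) obtain ps ss where xs: "xs = ps @ x @ ss" by (auto simp: sublist_def)
  have e: "x = take (length x) (drop (length ps) xs)" using xs by simp
  have l1: "length ps < length xs" using xs assms(2) by simp
  have lx: "length x \<in> {1..<7}" using assms(2,3) by (cases x) auto
  have "x \<in> (\<lambda>k. take k (drop (length ps) xs)) ` {1..<7}"
    using e lx by (rule image_eqI)
  then have "x \<in> set (map (\<lambda>k. take k (drop (length ps) xs)) [1..<7])" by simp
  then show ?thesis using l1 unfolding subs_def by (auto intro!: bexI[of _ "length ps"])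
qed

lemma G_closed: "\<forall>y\<in>set (GLb 1 @ GLb 2 @ GLb 3). \<forall>x\<in>set (subs (phi y)). inG x"
  by code_simp

definition Lang :: "nat list \<Rightarrow> bool" where
  "Lang w \<longleftrightarrow> (\<exists>n. sublist w ((phi ^^ n) [0]))"

lemma phi_prefix: "prefix a b \<Longrightarrow> prefix (phi a) (phi b)"
  by (auto simp: prefix_def)

lemma iter_prefix: "prefix ((phi ^^ n) [0]) (phi ((phi ^^ n) [0]))"
proof (induction n)
  case 0 then show ?case by (simp add: prefix_def)
next
  case (Suc n) then show ?case using phi_prefix by simp
qed

lemma Lang_sub: "Lang w \<Longrightarrow> sublist x w \<Longrightarrow> Lang x"
  unfolding Lang_def using sublist_order.order.trans by blast

lemma Lang_parse: "Lang x \<Longrightarrow> \<exists>y. Lang y \<and> sublist x (phi y)"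
proof -
  assume "Lang x"
  then obtain n where "sublist x ((phi ^^ n) [0])" unfolding Lang_def by blast
  moreover have "sublist ((phi ^^ n) [0]) (phi ((phi ^^ n) [0]))"
    using iter_prefix[of n] by (rule prefix_imp_sublist)
  ultimately have "sublist x (phi ((phi ^^ n) [0]))" using sublist_order.order.trans by blast
  moreover have "Lang ((phi ^^ n) [0])" unfolding Lang_def by blast
  ultimately show ?thesis by blast
qed

lemma pre6:
  assumes p: "prefix t (phi zs)" and l: "length t \<le> 6"
  shows "prefix t (phi (take 2 zs))"
proof (cases "2 \<le> length zs")
  case True
  have "6 \<le> length (phi (take 2 zs))" using len_phi[of "take 2 zs"] True by simp
  moreover have "phi zs = phi (take 2 zs) @ phi (drop 2 zs)" by (metis append_take_drop_id phi_append)
  ultimately show ?thesis using p l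
    by (metis le_trans prefix_append prefix_length_prefix prefix_order.refl)
next
  case False then show ?thesis using p by simp
qed

lemma window: "sublist x (phi z) \<Longrightarrow> length x \<le> 6 \<Longrightarrow> \<exists>y. sublist y z \<and> length y \<le> 3 \<and> sublist x (phi y)"
proof (induction z)
  case Nil then show ?case by (intro exI[of _ "[]"]) simp
next
  case (Cons a z)
  from Cons.prems(1) have "sublist x (phi_letter a @ phi z)" by simp
  then consider "sublist x (phi_letter a)" | "sublist x (phi z)"
    | x1 x2 where "x = x1 @ x2" "suffix x1 (phi_letter a)" "prefix x2 (phi z)"
    unfolding sublist_append by blast
  then show ?case
  proof cases
    case 1 then show ?thesis by (intro exI[of _ "[a]"]) (simp add: sublist_Cons_right)
  next
    case 2
    with Cons.IH Cons.prems(2) obtain y where "sublist y z" "length y \<le> 3" "sublist x (phi y)" by blast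
    then show ?thesis by (meson sublist_Cons_right)
  next
    case 3
    have "length x2 \<le> 6" using 3(1) Cons.prems(2) by simp
    then have "prefix x2 (phi (take 2 z))" using pre6 3(3) by blast
    then obtain s where s: "phi (take 2 z) = x2 @ s" by (auto simp: prefix_def)
    obtain r where r: "phi_letter a = r @ x1" using 3(2) by (auto simp: suffix_def)
    have "phi (a # take 2 z) = r @ x @ s" using r s 3(1) by simp
    then have "sublist x (phi (a # take 2 z))" by (metis sublist_appendI)
    moreover have "sublist (a # take 2 z) (a # z)"
      by (rule prefix_imp_sublist) (simp add: take_is_prefix)
    moreover have "length (a # take 2 z) \<le> 3" by simp
    ultimately show ?thesis by blast
  qed
qed

lemma sublist_single: "sublist x [a] \<Longrightarrow> x = [] \<or> x = [a]"
  by (auto simp: sublist_def Cons_eq_append_conv append_eq_Cons_conv)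

lemma Lang_inG_aux: "sublist x ((phi ^^ n) [0]) \<Longrightarrow> length x \<le> 6 \<Longrightarrow> inG x"
proof (induction n arbitrary: x)
  case 0
  then have "x = [] \<or> x = [0]" using sublist_single by simp
  moreover have "inG []" "inG [0]" unfolding inG_def GLb_def by simp_all
  ultimately show ?case by blast
next
  case (Suc n)
  show ?case
  proof (cases "x = []")
    case True
    have "inG []" unfolding inG_def GLb_def by simp
    then show ?thesis using True by simp
  next
    case False
    have "sublist x (phi ((phi ^^ n) [0]))" using Suc.prems(1) by simp
    then obtain y where y: "sublist y ((phi ^^ n) [0])" "length y \<le> 3" "sublist x (phi y)"
      using window Suc.prems(2) by blast
    have "y \<noteq> []" using y(3) False by auto
    have "inG y" using Suc.IH y(1,2) by fastforce
    have "length y = 1 \<or> length y = 2 \<or> length y = 3" using y(2) \<open>y \<noteq> []\<close> length_greater_0_conv[of y] by presburger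
    then have "y \<in> set (GLb 1 @ GLb 2 @ GLb 3)"
      using \<open>inG y\<close> unfolding inG_def by (elim disjE) simp_all
    moreover have "x \<in> set (subs (phi y))" using sublist_subs y(3) False Suc.prems(2) by blast
    ultimately show ?thesis using G_closed by blast
  qed
qed

lemma Lang_inG: "Lang x \<Longrightarrow> length x \<le> 6 \<Longrightarrow> inG x"
  unfolding Lang_def using Lang_inG_aux by blast


definition allowed :: "nat \<Rightarrow> nat \<Rightarrow> bool" where
  "allowed a b \<longleftrightarrow> (a = 0 \<and> (b = 1 \<or> b = 2)) \<or> (a = 1 \<and> (b = 0 \<or> b = 3)) \<or> (a = 2 \<and> b = 1) \<or> (a = 3 \<and> b = 0)"

fun valid :: "nat list \<Rightarrow> bool" where
  "valid (a # b # r) = (allowed a b \<and> valid (b # r))"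
| "valid _ = True"

lemma F_letters: "\<forall>x\<in>set (GLb 1). hd x \<le> 3"
  by code_simp

lemma F_pairs: "\<forall>x\<in>set (GLb 2). allowed (x ! 0) (x ! 1)"
  by code_simp

lemma F_left: "\<forall>x\<in>set (GLb 4). 2 \<le> length (filter (\<lambda>a. inG (a # x)) [0..<4]) \<longrightarrow> x ! 2 = 2 \<or> x ! 2 = 3"
  by code_simp

lemma F_right: "\<forall>x\<in>set (GLb 5). 2 \<le> length (filter (\<lambda>c. inG (x @ [c])) [0..<4]) \<longrightarrow> x = [0,1,3,0,1] \<or> x = [1,0,2,1,0]"
  by code_simp

lemma F_small: "\<forall>x\<in>set (GLb 1 @ GLb 2 @ GLb 3 @ GLb 4). 2 \<le> length (filter (\<lambda>a. inG (a # x)) [0..<4]) \<longrightarrow>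
   2 \<le> length (filter (\<lambda>c. inG (x @ [c])) [0..<4]) \<longrightarrow> theta1 x = x \<or> theta2 x = x"
  by code_simp

lemma two_filter:
  assumes "a \<noteq> b" "a \<le> 3" "b \<le> 3" "P a" "P b"
  shows "2 \<le> length (filter P [0..<4])"
proof -
  have "{a, b} \<subseteq> set (filter P [0..<4])" using assms by auto
  then have "card {a, b} \<le> card (set (filter P [0..<4]))" by (rule card_mono[rotated]) simp
  also have "\<dots> = length (filter P [0..<4])" by (rule distinct_card) simp
  finally show ?thesis using assms(1) by simp
qed

lemma Lang_letter: "Lang w \<Longrightarrow> a \<in> set w \<Longrightarrow> a \<le> 3"
proof -
  assume "Lang w" "a \<in> set w"
  then obtain xs ys where "w = xs @ a # ys" by (meson split_list)
  then have "sublist [a] w" by (metis append_Cons append_Nil sublist_appendI)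
  then have "inG [a]" using Lang_inG Lang_sub \<open>Lang w\<close> by fastforce
  then have "[a] \<in> set (GLb 1)" unfolding inG_def by simp
  then show "a \<le> 3" using F_letters by fastforce
qed

lemma Lang_valid: "Lang w \<Longrightarrow> valid w"
proof (induction w rule: valid.induct)
  case (1 a b r)
  have "sublist [a, b] (a # b # r)" by (rule prefix_imp_sublist) simp
  then have "inG [a, b]" using Lang_inG Lang_sub "1.prems" by fastforce
  then have "[a, b] \<in> set (GLb 2)" unfolding inG_def by (simp add: numeral_2_eq_2)
  then have "allowed a b" using F_pairs by fastforce
  moreover have "sublist (b # r) ([a] @ (b # r))" by (rule sublist_append_leftI)
  then have "Lang (b # r)" using Lang_sub "1.prems" by simp
  ultimately show ?case using "1.IH" by simp
qed simp_all


lemma phi_start: "y \<noteq> [] \<Longrightarrow> \<exists>r. phi y = 0 # 1 # 3 # r \<or> phi y = 1 # 0 # 2 # r"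
proof -
  assume "y \<noteq> []"
  then obtain h t where y: "y = h # t" by (cases y) auto
  show ?thesis using pl_cases[of h] y by auto
qed

lemma phi_nonempty:
  assumes "y \<noteq> []"
  shows "3 \<le> length (phi y)" "phi y ! 0 < 2" "phi y ! 1 < 2" "phi y ! 2 = 2 \<or> phi y ! 2 = 3"
  using phi_start[OF assms] by auto

lemma cut:
  "phi y = P @ Q \<Longrightarrow> 3 \<le> length Q \<Longrightarrow> Q ! 2 = 2 \<or> Q ! 2 = 3
   \<Longrightarrow> \<exists>y1 y2. y = y1 @ y2 \<and> phi y1 = P \<and> phi y2 = Q"
proof (induction y arbitrary: P)
  case Nil then show ?case by simp
next
  case (Cons x y)
  have eq: "phi_letter x @ phi y = P @ Q" using Cons.prems(1) by simp
  show ?case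
  proof (cases "P = []")
    case True then show ?thesis using Cons.prems(1) by (intro exI[of _ "[]"] exI[of _ "x # y"]) simp
  next
    case Pne: False
    from eq obtain us where
      c: "(phi_letter x = P @ us \<and> us @ phi y = Q) \<or> (phi_letter x @ us = P \<and> phi y = us @ Q)"
      by (auto simp: append_eq_append_conv2)
    then show ?thesis
    proof (elim disjE conjE)
      assume a1: "phi_letter x @ us = P" and a2: "phi y = us @ Q"
      from Cons.IH[OF a2 Cons.prems(2,3)] obtain y1 y2 where "y = y1 @ y2" "phi y1 = us" "phi y2 = Q"
        by blast
      then show ?thesis using a1 by (intro exI[of _ "x # y1"] exI[of _ y2]) simp
    next
      assume a1: "phi_letter x = P @ us" and a2: "us @ phi y = Q"
      show ?thesis
      proof (cases "us = []")
        case True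
        then show ?thesis using a1 a2 by (intro exI[of _ "[x]"] exI[of _ y]) simp
      next
        case usne: False
        have uc: "us = [3,0] \<or> us = [1,3,0] \<or> us = [0] \<or> us = [0,2,1] \<or> us = [2,1] \<or> us = [1]
               \<or> us = [0,2] \<or> us = [2] \<or> us = [1,3] \<or> us = [3]"
          using pl_cases[of x] a1 Pne usne
          by (auto simp: Cons_eq_append_conv append_eq_Cons_conv)
        have "y \<noteq> []"
        proof
          assume "y = []"
          then have "Q = us" using a2 by simp
          then show False using uc Cons.prems(2,3) by auto
        qed
        note pn = phi_nonempty[OF this]
        show ?thesis using uc a2 Cons.prems(3) pn by (auto simp: nth_append)
      qed
    qed
  qed
qed

function dec :: "nat list \<Rightarrow> nat list" where
  "dec (a # b # m # r) = (if r = [] then [if a = 0 then 3 else 2]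
     else if 3 \<le> length r \<and> (r ! 2 = 2 \<or> r ! 2 = 3) then (if a = 0 then 3 else 2) # dec r
     else (if a = 0 then 0 else 1) # dec (tl r))"
| "dec [] = []"
| "dec [a] = []"
| "dec [a, b] = []"
  by pat_completeness auto
termination by (relation "measure length") auto

lemma dec_phi: "\<forall>a\<in>set v. a \<le> 3 \<Longrightarrow> dec (phi v) = v"
proof (induction v)
  case Nil then show ?case by simp
next
  case (Cons x v)
  then have IH: "dec (phi v) = v" and x: "x \<le> 3" by auto
  have ne: "v \<noteq> [] \<Longrightarrow> 3 \<le> length (phi v) \<and> phi v ! 1 < 2 \<and> (phi v ! 2 = 2 \<or> phi v ! 2 = 3)"
    using phi_nonempty by blast
  from x consider "x = 0" | "x = 1" | "x = 2" | "x = 3" by linarith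
  then show ?case
  proof cases
    case 1 then show ?thesis using IH ne by (cases "v = []") auto
  next
    case 2 then show ?thesis using IH ne by (cases "v = []") auto
  next
    case 3 then show ?thesis using IH ne by (cases "v = []") auto
  next
    case 4 then show ?thesis using IH ne by (cases "v = []") auto
  qed
qed

lemma phi_inj: "\<forall>a\<in>set v. a \<le> 3 \<Longrightarrow> \<forall>a\<in>set v'. a \<le> 3 \<Longrightarrow> phi v = phi v' \<Longrightarrow> v = v'"
  by (metis dec_phi)


definition K :: "nat \<Rightarrow> nat list" where
  "K c = (if c = 1 \<or> c = 2 then [1,0,2,1,0] else [0,1,3,0,1])"

definition pt :: "nat \<Rightarrow> nat list" where
  "pt x = (if x = 0 then [0,2,1,0] else if x = 1 then [1,3,0,1] else if x = 2 then [2,1,0] else [3,0,1])"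

lemma conj_letter: "allowed x n \<Longrightarrow> K x @ pt x = phi_letter x @ K n"
  by (auto simp: allowed_def K_def pt_def)

lemma conj: "valid (v @ [c]) \<Longrightarrow> K (hd (v @ [c])) @ concat (map pt v) = phi v @ K c"
proof (induction v)
  case Nil then show ?case by simp
next
  case (Cons x v)
  obtain h rest where hr: "v @ [c] = h # rest" by (cases "v @ [c]") auto
  have "allowed x h" "valid (v @ [c])" using Cons.prems hr by auto
  then have "K x @ pt x = phi_letter x @ K h" and IH: "K h @ concat (map pt v) = phi v @ K c"
    using conj_letter Cons.IH hr by auto
  then show ?case by (simp, metis append_assoc)
qed

lemma valid_last: "valid (v @ [c]) \<Longrightarrow> v \<noteq> [] \<Longrightarrow> allowed (last v) c"
proof (induction v)
  case Nil then show ?case by simp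
next
  case (Cons x v)
  show ?case
  proof (cases "v = []")
    case True then show ?thesis using Cons.prems by simp
  next
    case False
    then obtain h t where "v = h # t" by (cases v) auto
    then show ?thesis using Cons by simp
  qed
qed

lemma rev_map_phi: "rev (map f (phi v)) = concat (map (\<lambda>x. rev (map f (phi_letter x))) (rev v))"
  by (induction v) auto

lemma theta_phi:
  assumes inv: "\<And>x. f (f x) = x" and pal: "rev (map f v) = v" and let3: "\<forall>a\<in>set v. a \<le> 3"
    and pt_eq: "\<And>x. x \<le> 3 \<Longrightarrow> rev (map f (phi_letter (f x))) = pt x"
  shows "rev (map f (phi v)) = concat (map pt v)"
proof -
  have "rev v = map f v" using pal by (metis rev_rev_ident)
  then have "rev (map f (phi v)) = concat (map (\<lambda>x. rev (map f (phi_letter x))) (map f v))"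
    using rev_map_phi by metis
  also have "\<dots> = concat (map (\<lambda>x. rev (map f (phi_letter (f x)))) v)" by (simp add: comp_def)
  also have "\<dots> = concat (map pt v)"
    using let3 pt_eq by (metis (no_types, lifting) map_eq_conv)
  finally show ?thesis .
qed

lemma pal_gen:
  assumes inv: "\<And>x. f (f x) = x" and pal: "rev (map f v) = v" and let3: "\<forall>a\<in>set v. a \<le> 3"
    and pt_eq: "\<And>x. x \<le> 3 \<Longrightarrow> rev (map f (phi_letter (f x))) = pt x"
    and Keq: "\<And>l c. allowed l c \<Longrightarrow> rev (map f (K c)) = K (f l)"
    and ne: "v \<noteq> []" and val: "valid (v @ [c])"
  shows "rev (map f (phi v @ K c)) = phi v @ K c"
proof -
  have hd: "hd v = f (last v)" using pal ne
    by (metis hd_rev last_map)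
  have "rev (map f (phi v @ K c)) = rev (map f (K c)) @ rev (map f (phi v))" by simp
  also have "\<dots> = K (hd v) @ concat (map pt v)"
    using Keq[OF valid_last[OF val ne]] theta_phi[OF inv pal let3 pt_eq] hd by simp
  also have "\<dots> = phi v @ K c" using conj[OF val] ne by simp
  finally show ?thesis .
qed

lemma pal1:
  assumes "theta1 v = v" "\<forall>a\<in>set v. a \<le> 3" "v \<noteq> []" "valid (v @ [c])"
  shows "theta1 (phi v @ K c) = phi v @ K c"
proof -
  have inv: "\<And>x. theta1_letter (theta1_letter x) = x" by (simp add: theta1_letter_def)
  have pt_eq: "\<And>x. x \<le> 3 \<Longrightarrow> rev (map theta1_letter (phi_letter (theta1_letter x))) = pt x"
  proof -
    fix x :: nat assume "x \<le> 3"
    then consider "x = 0" | "x = 1" | "x = 2" | "x = 3" by linarith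
    then show "rev (map theta1_letter (phi_letter (theta1_letter x))) = pt x"
      by cases (simp_all add: theta1_letter_def pt_def)
  qed
  have Keq: "\<And>l c. allowed l c \<Longrightarrow> rev (map theta1_letter (K c)) = K (theta1_letter l)"
  proof -
    fix l c assume "allowed l c"
    then consider "l = 0" "c = 1" | "l = 0" "c = 2" | "l = 1" "c = 0" | "l = 1" "c = 3" | "l = 2" "c = 1" | "l = 3" "c = 0"
      unfolding allowed_def by blast
    then show "rev (map theta1_letter (K c)) = K (theta1_letter l)"
      by cases (simp_all add: theta1_letter_def K_def)
  qed
  show ?thesis using assms unfolding theta1_def antimorph_def
    using pal_gen[OF inv _ _ pt_eq Keq] by blast
qed

lemma pal2:
  assumes "theta2 v = v" "\<forall>a\<in>set v. a \<le> 3" "v \<noteq> []" "valid (v @ [c])"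
  shows "theta2 (phi v @ K c) = phi v @ K c"
proof -
  have inv: "\<And>x. theta2_letter (theta2_letter x) = x" by (simp add: theta2_letter_def)
  have pt_eq: "\<And>x. x \<le> 3 \<Longrightarrow> rev (map theta2_letter (phi_letter (theta2_letter x))) = pt x"
  proof -
    fix x :: nat assume "x \<le> 3"
    then consider "x = 0" | "x = 1" | "x = 2" | "x = 3" by linarith
    then show "rev (map theta2_letter (phi_letter (theta2_letter x))) = pt x"
      by cases (simp_all add: theta2_letter_def pt_def)
  qed
  have Keq: "\<And>l c. allowed l c \<Longrightarrow> rev (map theta2_letter (K c)) = K (theta2_letter l)"
  proof -
    fix l c assume "allowed l c"
    then consider "l = 0" "c = 1" | "l = 0" "c = 2" | "l = 1" "c = 0" | "l = 1" "c = 3" | "l = 2" "c = 1" | "l = 3" "c = 0"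
      unfolding allowed_def by blast
    then show "rev (map theta2_letter (K c)) = K (theta2_letter l)"
      by cases (simp_all add: theta2_letter_def K_def)
  qed
  show ?thesis using assms unfolding theta2_def antimorph_def
    using pal_gen[OF inv _ _ pt_eq Keq] by blast
qed


lemma last_pl: "g \<le> 3 \<Longrightarrow> last (phi_letter g) = g"
proof -
  assume "g \<le> 3"
  then consider "g = 0" | "g = 1" | "g = 2" | "g = 3" by linarith
  then show ?thesis by cases simp_all
qed

lemma left_parse:
  assumes La: "Lang (a # w)" and wPT: "w = P @ T" and T5: "T = [0,1,3,0,1] \<or> T = [1,0,2,1,0]"
    and m2: "w ! 2 = 2 \<or> w ! 2 = 3" and lw: "3 \<le> length w"
  shows "\<exists>v. phi v = P \<and> Lang (a # v)"
proof -
  obtain y where y: "Lang y" "sublist (a # w) (phi y)" using Lang_parse[OF La] by blast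
  then obtain s p where sp: "phi y = s @ (a # w) @ p" by (auto simp: sublist_def)
  have "phi y = (s @ [a]) @ (w @ p)" using sp by simp
  moreover have "3 \<le> length (w @ p)" using lw by simp
  moreover have "(w @ p) ! 2 = 2 \<or> (w @ p) ! 2 = 3" using m2 lw by (simp add: nth_append)
  ultimately obtain y1 y2 where c1: "y = y1 @ y2" "phi y1 = s @ [a]" "phi y2 = w @ p"
    using cut by blast
  have "phi y2 = P @ (T @ p)" using c1(3) wPT by simp
  moreover have "3 \<le> length (T @ p)" "(T @ p) ! 2 = 2 \<or> (T @ p) ! 2 = 3" using T5 by auto
  ultimately obtain v y3 where c2: "y2 = v @ y3" "phi v = P" using cut by blast
  have "y1 \<noteq> []" using c1(2) by auto
  then obtain y1' g where g: "y1 = y1' @ [g]" by (cases y1 rule: rev_cases) auto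
  have "g \<le> 3" using Lang_letter[OF y(1)] c1(1) g by simp
  have pne: "phi_letter g \<noteq> []" using len_pl[of g] by auto
  have "last (phi y1' @ phi_letter g) = a" using c1(2) g by simp
  then have "last (phi_letter g) = a" using pne by simp
  then have "g = a" using last_pl \<open>g \<le> 3\<close> by simp
  then have "y = y1' @ (a # v) @ y3" using c1(1) c2(1) g by simp
  then have "Lang (a # v)" using Lang_sub y(1) by (metis sublist_appendI)
  then show ?thesis using c2(2) by blast
qed

lemma ec:
  assumes e3: "e \<le> 3" and eq: "phi_letter e @ phi y4 = T @ c # p" and T5: "T = [0,1,3,0,1] \<or> T = [1,0,2,1,0]"
  shows "e = c \<and> T = K c"
proof -
  have "y4 \<noteq> []"
  proof
    assume "y4 = []"
    then have "length (phi_letter e) = length T + 1 + length p" using eq by simp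
    then show False using pl_cases[of e] T5 by auto
  qed
  then obtain r where r: "phi y4 = 0 # 1 # 3 # r \<or> phi y4 = 1 # 0 # 2 # r" using phi_start by blast
  from e3 consider "e = 0" | "e = 1" | "e = 2" | "e = 3" by linarith
  then show ?thesis
    by cases (use eq T5 r in \<open>auto simp: K_def\<close>)
qed

lemma right_parse:
  assumes Lc: "Lang (w @ [c])" and wPT: "w = P @ T" and T5: "T = [0,1,3,0,1] \<or> T = [1,0,2,1,0]"
    and m2: "w ! 2 = 2 \<or> w ! 2 = 3" and lw: "3 \<le> length w"
  shows "\<exists>v. phi v = P \<and> Lang (v @ [c]) \<and> T = K c"
proof -
  obtain y where y: "Lang y" "sublist (w @ [c]) (phi y)" using Lang_parse[OF Lc] by blast
  then obtain s p where sp: "phi y = s @ (w @ [c]) @ p" by (auto simp: sublist_def)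
  have "phi y = s @ (w @ c # p)" using sp by simp
  moreover have "3 \<le> length (w @ c # p)" using lw by simp
  moreover have "(w @ c # p) ! 2 = 2 \<or> (w @ c # p) ! 2 = 3" using m2 lw by (simp add: nth_append)
  ultimately obtain y1 y2 where c1: "y = y1 @ y2" "phi y2 = w @ c # p"
    using cut by blast
  have "phi y2 = P @ (T @ c # p)" using c1(2) wPT by simp
  moreover have "3 \<le> length (T @ c # p)" "(T @ c # p) ! 2 = 2 \<or> (T @ c # p) ! 2 = 3" using T5 by auto
  ultimately obtain v y3 where c2: "y2 = v @ y3" "phi v = P" "phi y3 = T @ c # p" using cut by blast
  have "y3 \<noteq> []" using c2(3) by auto
  then obtain e y4 where e: "y3 = e # y4" by (cases y3) auto
  have "e \<le> 3" using Lang_letter[OF y(1)] c1(1) c2(1) e by simp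
  have "phi_letter e @ phi y4 = T @ c # p" using c2(3) e by simp
  then have ecK: "e = c \<and> T = K c" using ec \<open>e \<le> 3\<close> T5 by blast
  then have "y = y1 @ (v @ [c]) @ y4" using c1(1) c2(1) e by simp
  then have "Lang (v @ [c])" using Lang_sub y(1) by (metis sublist_appendI)
  then show ?thesis using c2(2) ecK by blast
qed

definition LB :: "nat list \<Rightarrow> bool" where
  "LB w \<longleftrightarrow> (\<exists>a b. a \<noteq> b \<and> Lang (a # w) \<and> Lang (b # w)) \<and> (\<exists>c d. c \<noteq> d \<and> Lang (w @ [c]) \<and> Lang (w @ [d]))"

lemma Lang_inG': "Lang x \<Longrightarrow> length x = n \<Longrightarrow> n \<le> 6 \<Longrightarrow> x \<in> set (GLb n)"
  using Lang_inG unfolding inG_def by blast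

lemma main: "LB w \<Longrightarrow> w \<noteq> [] \<Longrightarrow> theta1 w = w \<or> theta2 w = w"
proof (induction "length w" arbitrary: w rule: less_induct)
  case less
  obtain a b c d where ab: "a \<noteq> b" "Lang (a # w)" "Lang (b # w)"
    and cd: "c \<noteq> d" "Lang (w @ [c])" "Lang (w @ [d])"
    using less.prems(1) unfolding LB_def by blast
  have a3: "a \<le> 3" "b \<le> 3" "c \<le> 3" "d \<le> 3" using Lang_letter ab cd by auto
  have "sublist w ([a] @ w)" by (rule sublist_append_leftI)
  then have Lw: "Lang w" using Lang_sub[OF ab(2)] by simp
  show ?case
  proof (cases "length w \<le> 4")
    case True
    have "inG (a # w)" "inG (b # w)" "inG (w @ [c])" "inG (w @ [d])"
      using Lang_inG ab cd True by auto
    moreover have "w \<in> set (GLb 1 @ GLb 2 @ GLb 3 @ GLb 4)"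
    proof -
      have "length w = 1 \<or> length w = 2 \<or> length w = 3 \<or> length w = 4"
        using True less.prems(2) length_greater_0_conv[of w] by presburger
      then show ?thesis using Lang_inG'[OF Lw] by auto
    qed
    ultimately have "2 \<le> length (filter (\<lambda>a. inG (a # w)) [0..<4])"
      "2 \<le> length (filter (\<lambda>c. inG (w @ [c])) [0..<4])"
      "w \<in> set (GLb 1 @ GLb 2 @ GLb 3 @ GLb 4)"
      using two_filter[of a b "\<lambda>a. inG (a # w)"] two_filter[of c d "\<lambda>c. inG (w @ [c])"] ab(1) cd(1) a3
      by auto
    then show ?thesis using F_small by blast
  next
    case False
    define x where "x = take 4 w"
    have lx: "length x = 4" using False unfolding x_def by simp
    have "prefix (a # x) (a # w)" "prefix (b # x) (b # w)" unfolding x_def by (simp_all add: take_is_prefix)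
    then have "Lang (a # x)" "Lang (b # x)" using Lang_sub ab prefix_imp_sublist by blast+
    then have "inG (a # x)" "inG (b # x)" using Lang_inG lx by auto
    moreover have "Lang x" unfolding x_def
      by (rule Lang_sub[OF Lw]) (rule prefix_imp_sublist, rule take_is_prefix)
    then have "x \<in> set (GLb 4)" using Lang_inG'[OF _ lx] by simp
    ultimately have "2 \<le> length (filter (\<lambda>a. inG (a # x)) [0..<4])" "x \<in> set (GLb 4)"
      using two_filter[of a b "\<lambda>a. inG (a # x)"] ab(1) a3 by auto
    then have "x ! 2 = 2 \<or> x ! 2 = 3" using F_left by blast
    then have m2: "w ! 2 = 2 \<or> w ! 2 = 3" unfolding x_def by simp
    define T where "T = drop (length w - 5) w"
    define P where "P = take (length w - 5) w"
    have wPT: "w = P @ T" unfolding P_def T_def by simp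
    have lT: "length T = 5" using False unfolding T_def by simp
    have "suffix (T @ [c]) (w @ [c])" "suffix (T @ [d]) (w @ [d])"
      using wPT by (metis suffix_append suffix_order.refl)+
    then have "Lang (T @ [c])" "Lang (T @ [d])" using Lang_sub cd suffix_imp_sublist by blast+
    then have "inG (T @ [c])" "inG (T @ [d])" using Lang_inG lT by auto
    moreover have "Lang T" 
      by (rule Lang_sub[OF Lw]) (subst wPT, rule sublist_append_leftI)
    then have "T \<in> set (GLb 5)" using Lang_inG'[OF _ lT] by simp
    ultimately have "2 \<le> length (filter (\<lambda>c. inG (T @ [c])) [0..<4])" "T \<in> set (GLb 5)"
      using two_filter[of c d "\<lambda>c. inG (T @ [c])"] cd(1) a3 by auto
    then have T5: "T = [0,1,3,0,1] \<or> T = [1,0,2,1,0]" using F_right by blast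
    have lw3: "3 \<le> length w" using False by simp
    obtain va where va: "phi va = P" "Lang (a # va)" using left_parse[OF ab(2) wPT T5 m2 lw3] by blast
    obtain vb where vb: "phi vb = P" "Lang (b # vb)" using left_parse[OF ab(3) wPT T5 m2 lw3] by blast
    obtain vc where vc: "phi vc = P" "Lang (vc @ [c])" "T = K c" using right_parse[OF cd(2) wPT T5 m2 lw3] by blast
    obtain vd where vd: "phi vd = P" "Lang (vd @ [d])" using right_parse[OF cd(3) wPT T5 m2 lw3] by blast
    have l3: "\<forall>x\<in>set va. x \<le> 3" "\<forall>x\<in>set vb. x \<le> 3" "\<forall>x\<in>set vc. x \<le> 3" "\<forall>x\<in>set vd. x \<le> 3"
      using Lang_letter va(2) vb(2) vc(2) vd(2) by fastforce+
    have "vb = va" "vc = va" "vd = va" using phi_inj l3 va(1) vb(1) vc(1) vd(1) by metis+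
    then have LBv: "LB va" unfolding LB_def using ab(1) cd(1) va(2) vb(2) vc(2) vd(2) by metis
    show ?thesis
    proof (cases "va = []")
      case True
      then have "w = T" using wPT va(1) by simp
      then show ?thesis using T5 by (auto simp: theta1_def antimorph_def theta1_letter_def)
    next
      case vne: False
      have "3 * length va \<le> length P" using len_phi[of va] va(1) by simp
      moreover have "length P < length w" using wPT lT by simp
      ultimately have "length va < length w" by linarith
      then have IH: "theta1 va = va \<or> theta2 va = va" using less.hyps LBv vne by blast
      have val: "valid (va @ [c])" using Lang_valid vc(2) \<open>vc = va\<close> by simp
      have wK: "w = phi va @ K c" using wPT va(1) vc(3) by simp
      from IH show ?thesis
      proof
        assume "theta1 va = va"
        then show ?thesis using pal1 l3(1) vne val wK by metis
      next
        assume "theta2 va = va"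
        then show ?thesis using pal2 l3(1) vne val wK by metis
      qed
    qed
  qed
qed

lemma len_iter: "Suc n \<le> length ((phi ^^ n) [0])"
proof (induction n)
  case 0 then show ?case by simp
next
  case (Suc n)
  have "3 * length ((phi ^^ n) [0]) \<le> length (phi ((phi ^^ n) [0]))" by (rule len_phi)
  then show ?case using Suc by simp
qed

lemma factor_Lang: "is_fixed_point_0 u \<Longrightarrow> factor x u \<Longrightarrow> Lang x"
proof -
  assume fp: "is_fixed_point_0 u" and f: "factor x u"
  from f obtain i where x: "x = map u [i..<i + length x]" unfolding factor_def by blast
  define N where "N = i + length x"
  define z where "z = (phi ^^ N) [0]"
  have lz: "N < length z" using len_iter[of N] unfolding z_def by simp
  have pz: "\<forall>k < length z. z ! k = u k" using fp unfolding is_fixed_point_0_def prefix_of_inf_def z_def by blast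
  have xz: "x = take (length x) (drop i z)"
  proof (rule nth_equalityI)
    show "length x = length (take (length x) (drop i z))" using lz N_def by simp
    fix k assume k: "k < length x"
    have "map u [i..<i + length x] ! k = u (i + k)" using k by simp
    then have "x ! k = u (i + k)" using x by simp
    moreover have "take (length x) (drop i z) ! k = z ! (i + k)" using k lz N_def by simp
    moreover have "z ! (i + k) = u (i + k)" using pz k lz N_def by simp
    ultimately show "x ! k = take (length x) (drop i z) ! k" by simp
  qed
  have "z = take i z @ take (length x) (drop i z) @ drop (length x) (drop i z)"
    by (metis append_take_drop_id)
  then have "sublist x z" using xz by (metis sublist_appendI)
  then show "Lang x" unfolding Lang_def z_def by blast
qed

theorem corollary22:
  fixes u :: "nat \<Rightarrow> nat" and w :: "nat list"
  assumes "is_fixed_point_0 u"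
    and "w \<noteq> []"
    and "bispecial w u"
  shows "theta1 w = w \<or> theta2 w = w"
proof -
  have "LB w" using assms(3) factor_Lang[OF assms(1)]
    unfolding bispecial_def left_special_def right_special_def LB_def by blast
  then show ?thesis using main assms(2) by blast
qed

end
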